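(* Let $N$ be a binary network that contains a crown, i.e. there are an integer $k\ge 2$ and distinct nodes $u_1,\dots,u_k,v_1,\dots,v_k$ of $N$ such that $(u_i,v_i)$ and $(u_i,v_{i+1})$ are arcs of $N$ for all $i\in\{1,\dots,k\}$ (indices taken modulo $k$). Then $N$ does not admit an HGT-consistent labelling. In particular, there exist binary tree-based networks (for instance, the network on taxa $\{a,b\}$ consisting of a root, its child $w$, two children $u_1,u_2$ of $w$, reticulations $v_1,v_2$ each with parents $u_1,u_2$, and leaves $a,b$ as children of $v_1,v_2$ respectively) that admit no HGT-consistent labelling.
   Context: A (directed phylogenetic) network on a finite taxa set $X$ is a directed acyclic graph without parallel arcs whose nodes are of the following types: a unique root (indegree 0, outdegree 1); tree nodes (indegree 1, outdegree at least 2); reticulations (indegree at least 2, outdegree 1); leaves (indegree 1, outdegree 0), the leaves being bijectively labelled by $X$. Non-leaf nodes are called internal. A network is binary if every tree node and every reticulation has total degree (indegree plus outdegree) exactly 3. HGT-consistent labelling: Let $N$ be a binary network with node set $V$. An HGT-consistent labelling of $N$ is a map $t:V\to\mathbb{R}$ such that (1) for every arc $(u,v)$, $t(u)\le t(v)$, and equality is allowed only if $v$ is a reticulation; (2) every internal node $u$ has a child $v$ with $t(u)<t(v)$; (3) for every reticulation $r$ with parents $u$ and $v$, exactly one of $t(u)=t(r)$ and $t(v)=t(r)$ holds. Tree-based: A binary network $N$ is tree-based with base tree $T$ (a binary tree on the same taxa) if $N$ can be obtained from $T$ by: (i) replacing some arcs of $T$ by directed paths whose internal nodes (attachment points) have indegree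 1 and outdegree 1; (ii) adding arcs (linking arcs) between attachment points so that no node has total degree greater than 3 and the graph stays acyclic; (iii) suppressing all attachment points not incident to a linking arc. *)

theory Defs
  imports Complex_Main
begin

(* A directed graph is given by a node set V and an arc set A (a set, so no
   parallel arcs).  Leaves are labelled by a map lab from the taxa set X. *)

definition indeg :: "('v \<times> 'v) set \<Rightarrow> 'v \<Rightarrow> nat" where
  "indeg A v = card {u. (u, v) \<in> A}"

definition outdeg :: "('v \<times> 'v) set \<Rightarrow> 'v \<Rightarrow> nat" where
  "outdeg A v = card {w. (v, w) \<in> A}"

definition is_root :: "('v \<times> 'v) set \<Rightarrow> 'v \<Rightarrow> bool" where
  "is_root A v \<longleftrightarrow> indeg A v = 0 \<and> outdeg A v = 1"

definition is_tree_node :: "('v \<times> 'v) set \<Rightarrow> 'v \<Rightarrow> bool" where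
  "is_tree_node A v \<longleftrightarrow> indeg A v = 1 \<and> outdeg A v \<ge> 2"

definition is_reticulation :: "('v \<times> 'v) set \<Rightarrow> 'v \<Rightarrow> bool" where
  "is_reticulation A v \<longleftrightarrow> indeg A v \<ge> 2 \<and> outdeg A v = 1"

definition is_leaf :: "('v \<times> 'v) set \<Rightarrow> 'v \<Rightarrow> bool" where
  "is_leaf A v \<longleftrightarrow> indeg A v = 1 \<and> outdeg A v = 0"

definition is_internal :: "('v \<times> 'v) set \<Rightarrow> 'v \<Rightarrow> bool" where
  "is_internal A v \<longleftrightarrow> \<not> is_leaf A v"

definition network :: "'v set \<Rightarrow> ('v \<times> 'v) set \<Rightarrow> 'x set \<Rightarrow> ('x \<Rightarrow> 'v) \<Rightarrow> bool" where
  "network V A X lab \<longleftrightarrow>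
     finite V \<and> finite X \<and> A \<subseteq> V \<times> V \<and> acyclic A \<and>
     (\<exists>!r. r \<in> V \<and> is_root A r) \<and>
     (\<forall>v\<in>V. is_root A v \<or> is_tree_node A v \<or> is_reticulation A v \<or> is_leaf A v) \<and>
     bij_betw lab X {v \<in> V. is_leaf A v}"

definition binary_network :: "'v set \<Rightarrow> ('v \<times> 'v) set \<Rightarrow> 'x set \<Rightarrow> ('x \<Rightarrow> 'v) \<Rightarrow> bool" where
  "binary_network V A X lab \<longleftrightarrow> network V A X lab \<and>
     (\<forall>v\<in>V. (is_tree_node A v \<or> is_reticulation A v) \<longrightarrow> indeg A v + outdeg A v = 3)"

definition hgt_consistent :: "'v set \<Rightarrow> ('v \<times> 'v) set \<Rightarrow> ('v \<Rightarrow> real) \<Rightarrow> bool" where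
  "hgt_consistent V A t \<longleftrightarrow>
     (\<forall>(u, v)\<in>A. t u \<le> t v \<and> (t u = t v \<longrightarrow> is_reticulation A v)) \<and>
     (\<forall>u\<in>V. is_internal A u \<longrightarrow> (\<exists>v. (u, v) \<in> A \<and> t u < t v)) \<and>
     (\<forall>r\<in>V. is_reticulation A r \<longrightarrow>
        (\<forall>u w. (u, r) \<in> A \<and> (w, r) \<in> A \<and> u \<noteq> w \<longrightarrow> ((t u = t r) \<noteq> (t w = t r))))"

definition has_crown :: "'v set \<Rightarrow> ('v \<times> 'v) set \<Rightarrow> bool" where
  "has_crown V A \<longleftrightarrow> (\<exists>k::nat. \<exists>u v :: nat \<Rightarrow> 'v. k \<ge> 2 \<and>
     inj_on u {..<k} \<and> inj_on v {..<k} \<and> u ` {..<k} \<inter> v ` {..<k} = {} \<and>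
     u ` {..<k} \<subseteq> V \<and> v ` {..<k} \<subseteq> V \<and>
     (\<forall>i<k. (u i, v i) \<in> A \<and> (u i, v (Suc i mod k)) \<in> A))"

definition path_arcs :: "'v list \<Rightarrow> ('v \<times> 'v) set" where
  "path_arcs p = set (zip p (tl p))"

(* Tree-based with base tree T = (VT, AT).  Up to isomorphism, the nodes of T
   are identified with the nodes of N they remain; the other nodes of N are the
   (non-suppressed) attachment points P = V - VT.  Each arc (x,y) of T is
   replaced by the path x # sub (x,y) @ [y] through attachment points; these
   subdivision paths are internally disjoint and their arcs are exactly the
   non-linking arcs; linking arcs L join attachment points; every remaining
   attachment point is incident to a linking arc.  Degree bound and
   acyclicity follow from N being a binary network. *)
definition tree_based_with :: "'v set \<Rightarrow> ('v \<times> 'v) set \<Rightarrow> 'x set \<Rightarrow> ('x \<Rightarrow> 'v)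
     \<Rightarrow> 'v set \<Rightarrow> ('v \<times> 'v) set \<Rightarrow> bool" where
  "tree_based_with V A X lab VT AT \<longleftrightarrow>
     binary_network VT AT X lab \<and> (\<forall>v\<in>VT. \<not> is_reticulation AT v) \<and> VT \<subseteq> V \<and>
     (\<exists>L sub. L \<subseteq> A \<and> L \<subseteq> (V - VT) \<times> (V - VT) \<and>
        (\<forall>p\<in>V - VT. \<exists>q. (p, q) \<in> L \<or> (q, p) \<in> L) \<and>
        (\<forall>e\<in>AT. distinct (sub e) \<and> set (sub e) \<subseteq> V - VT) \<and>
        (\<forall>e\<in>AT. \<forall>e'\<in>AT. e \<noteq> e' \<longrightarrow> set (sub e) \<inter> set (sub e') = {}) \<and>
        (\<Union>e\<in>AT. set (sub e)) = V - VT \<and>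
        A - L = (\<Union>(x, y)\<in>AT. path_arcs (x # sub (x, y) @ [y])))"

definition tree_based :: "'v set \<Rightarrow> ('v \<times> 'v) set \<Rightarrow> 'x set \<Rightarrow> ('x \<Rightarrow> 'v) \<Rightarrow> bool" where
  "tree_based V A X lab \<longleftrightarrow> binary_network V A X lab \<and> (\<exists>VT AT. tree_based_with V A X lab VT AT)"

(* The example: root 0, w = 1, u1 = 2, u2 = 3, v1 = 4, v2 = 5, leaves a = 6, b = 7;
   taxa a = 0, b = 1. *)
definition ex_V :: "nat set" where "ex_V = {0..7}"
definition ex_A :: "(nat \<times> nat) set" where
  "ex_A = {(0,1), (1,2), (1,3), (2,4), (3,4), (2,5), (3,5), (4,6), (5,7)}"
definition ex_X :: "nat set" where "ex_X = {0, 1}"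
definition ex_lab :: "nat \<Rightarrow> nat" where "ex_lab x = (if x = 0 then 6 else 7)"

end

theory Submission
  imports Defs
begin


lemma core:
  fixes a b :: "nat \<Rightarrow> real" and k :: nat
  assumes k: "k \<ge> 2"
  and A1: "\<forall>i<k. a i \<le> b i \<and> a i \<le> b (Suc i mod k)"
  and A2: "\<forall>i<k. a i < b i \<or> a i < b (Suc i mod k)"
  and A3: "\<forall>i<k. (a i = b (Suc i mod k)) \<noteq> (a (Suc i mod k) = b (Suc i mod k))"
  shows False
proof (cases "a 0 = b 0")
  case True
  have P: "i < k \<Longrightarrow> a i = b i \<and> a 0 \<le> a i" for i
  proof (induction i)
    case 0 then show ?case using True by simp
  next
    case (Suc i)
    then have i: "i < k" by simp
    with Suc.IH have e: "a i = b i" and le: "a 0 \<le> a i" by auto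
    have m: "Suc i mod k = Suc i" using Suc.prems by simp
    have "a i < b (Suc i)" using A1 A2 i e m by fastforce
    then have "a (Suc i) = b (Suc i)" using A3 i m by auto
    then show ?case using \<open>a i < b (Suc i)\<close> le by simp
  qed
  have k1: "k - 1 < k" "Suc (k - 1) mod k = 0" using k by auto
  from P[OF k1(1)] have "a (k-1) = b (k-1)" "a 0 \<le> a (k-1)" by auto
  moreover have "a (k-1) < b 0" using A1 A2 k1 calculation(1) by fastforce
  ultimately show False using True by simp
next
  case False
  have k1: "k - 1 < k" "Suc (k - 1) mod k = 0" using k by auto
  have lt0: "a 0 < b 0" using A1 k False by fastforce
  have f: "a (k-1) = b 0" using A3 k1 False by auto
  have P: "n < k \<Longrightarrow> a (k-1-n) = b (Suc (k-1-n) mod k) \<and> a (k-1) \<le> a (k-1-n)" for n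
  proof (induction n)
    case 0 then show ?case using f k1 by simp
  next
    case (Suc n)
    define j where "j = k - 1 - n"
    have j: "j < k" "j \<ge> 1" using Suc.prems unfolding j_def by auto
    have jj: "k - 1 - Suc n = j - 1" unfolding j_def by simp
    have sj: "Suc (j - 1) mod k = j" "Suc (j-1) = j" using j by auto
    from Suc.IH Suc.prems have e: "a j = b (Suc j mod k)" and le: "a (k-1) \<le> a j"
      unfolding j_def by auto
    have "a j < b j" using A1 A2 j e by fastforce
    moreover have "j - 1 < k" using j by simp
    ultimately have "a (j-1) = b j" using A3 sj by (metis order_less_irrefl)
    moreover have "a (j - 1) \<le> b j" using A1 \<open>j - 1 < k\<close> sj by metis
    show ?case unfolding jj using \<open>a j < b j\<close> \<open>a (j-1) = b j\<close> le sj by simp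
  qed
  from P[OF k1(1)] have "a 0 = b (Suc 0 mod k)" "a (k-1) \<le> a 0" using k by auto
  then show False using lt0 f by simp
qed


lemma part1:
  assumes bn: "binary_network V A X lab" and hc: "has_crown V A" and h: "hgt_consistent V A t"
  shows False
proof -
  from bn have net: "network V A X lab" and bin: "\<forall>v\<in>V. (is_tree_node A v \<or> is_reticulation A v) \<longrightarrow> indeg A v + outdeg A v = 3"
    unfolding binary_network_def by auto
  from net have fin: "finite V" and AV: "A \<subseteq> V \<times> V"
    and cls: "\<forall>v\<in>V. is_root A v \<or> is_tree_node A v \<or> is_reticulation A v \<or> is_leaf A v"
    unfolding network_def by auto
  have finA: "finite A" using fin AV finite_subset by blast
  have finout: "finite {w. (x, w) \<in> A}" for x
    proof (rule finite_subset[OF _ finite_imageI[OF finA, of snd]])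
      show "{w. (x, w) \<in> A} \<subseteq> snd ` A" using rev_image_eqI[of "(x,_)" A _ snd] by auto
    qed
  have finin: "finite {w. (w, x) \<in> A}" for x
    proof (rule finite_subset[OF _ finite_imageI[OF finA, of fst]])
      show "{w. (w, x) \<in> A} \<subseteq> fst ` A" using rev_image_eqI[of "(_,x)" A _ fst] by auto
    qed
  obtain H1: "\<forall>(x, y)\<in>A. t x \<le> t y \<and> (t x = t y \<longrightarrow> is_reticulation A y)"
    and H2: "\<forall>x\<in>V. is_internal A x \<longrightarrow> (\<exists>y. (x, y) \<in> A \<and> t x < t y)"
    and H3: "\<forall>r\<in>V. is_reticulation A r \<longrightarrow>
        (\<forall>x w. (x, r) \<in> A \<and> (w, r) \<in> A \<and> x \<noteq> w \<longrightarrow> ((t x = t r) \<noteq> (t w = t r)))"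
    by (insert h[unfolded hgt_consistent_def], elim conjE, rule that, assumption+)
  obtain k u v where k: "k \<ge> 2" and iu: "inj_on u {..<k}" and iv: "inj_on v {..<k}"
    and dj: "u ` {..<k} \<inter> v ` {..<k} = {}"
    and uV: "u ` {..<k} \<subseteq> V" and vV: "v ` {..<k} \<subseteq> V"
    and arcs: "\<forall>i<k. (u i, v i) \<in> A \<and> (u i, v (Suc i mod k)) \<in> A"
    by (insert hc[unfolded has_crown_def], elim exE conjE, rule that, assumption+)
  have sne: "Suc i mod k \<noteq> i" if i: "i < k" for i
  proof (cases "Suc i < k")
    case False
    then have "Suc i = k" using i by simp
    then show ?thesis using k by auto
  qed simp
  have slt: "Suc i mod k < k" for i using k by simp
  have children: "{w. (u i, w) \<in> A} = {v i, v (Suc i mod k)}" if i: "i < k" for i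
  proof -
    have sub: "{v i, v (Suc i mod k)} \<subseteq> {w. (u i, w) \<in> A}" using arcs i by auto
    have d: "v i \<noteq> v (Suc i mod k)" using iv i slt sne[OF i] by (metis inj_onD lessThan_iff)
    have c2: "card {v i, v (Suc i mod k)} = 2" using d by simp
    have o2: "outdeg A (u i) \<ge> 2" unfolding outdeg_def using card_mono[OF finout sub] c2 by simp
    have uin: "u i \<in> V" using uV i by auto
    have "is_tree_node A (u i)" using cls uin o2
      unfolding is_root_def is_reticulation_def is_leaf_def by auto
    then have "outdeg A (u i) = 2" using bin uin unfolding is_tree_node_def by auto
    then have "card {w. (u i, w) \<in> A} = card {v i, v (Suc i mod k)}" using c2 unfolding outdeg_def by simp
    then show ?thesis using card_subset_eq[OF finout sub] by simp
  qed
  have internal: "i < k \<Longrightarrow> is_internal A (u i)" for i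
    using children[of i] unfolding is_internal_def is_leaf_def outdeg_def by auto
  have ret: "is_reticulation A (v (Suc i mod k))" if i: "i < k" for i
  proof -
    let ?j = "Suc i mod k"
    have sub: "{u i, u ?j} \<subseteq> {w. (w, v ?j) \<in> A}" using arcs i slt by auto
    have d: "u i \<noteq> u ?j" using iu i slt sne[OF i] by (metis inj_onD lessThan_iff)
    have "indeg A (v ?j) \<ge> 2" unfolding indeg_def using card_mono[OF finin sub] d by simp
    moreover have "v ?j \<in> V" using vV slt by auto
    ultimately show ?thesis using cls
      unfolding is_root_def is_tree_node_def is_leaf_def by auto
  qed
  show False
  proof (rule core[of k "\<lambda>i. t (u i)" "\<lambda>i. t (v i)"])
    show "2 \<le> k" by fact
    show "\<forall>i<k. t (u i) \<le> t (v i) \<and> t (u i) \<le> t (v (Suc i mod k))"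
      proof (intro allI impI conjI)
      fix i assume i: "i < k"
      show "t (u i) \<le> t (v i)" using H1 arcs i by blast
      show "t (u i) \<le> t (v (Suc i mod k))" using H1 arcs i by blast
    qed
    show "\<forall>i<k. t (u i) < t (v i) \<or> t (u i) < t (v (Suc i mod k))"
    proof (intro allI impI)
      fix i assume i: "i < k"
      obtain y where y: "(u i, y) \<in> A" "t (u i) < t y" using H2 internal[OF i] uV i by auto
      have "y \<in> {v i, v (Suc i mod k)}" using children[OF i] y(1) by blast
      then show "t (u i) < t (v i) \<or> t (u i) < t (v (Suc i mod k))" using y(2) by auto
    qed
    show "\<forall>i<k. (t (u i) = t (v (Suc i mod k))) \<noteq> (t (u (Suc i mod k)) = t (v (Suc i mod k)))"
    proof (intro allI impI)
      fix i assume i: "i < k"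
      have d: "u i \<noteq> u (Suc i mod k)" using iu i slt sne[OF i] by (metis inj_onD lessThan_iff)
      show "(t (u i) = t (v (Suc i mod k))) \<noteq> (t (u (Suc i mod k)) = t (v (Suc i mod k)))"
      proof -
        have r: "v (Suc i mod k) \<in> V" using vV slt by auto
        have a1: "(u i, v (Suc i mod k)) \<in> A" using arcs i by blast
        have a2: "(u (Suc i mod k), v (Suc i mod k)) \<in> A" using arcs slt by blast
        show ?thesis using H3 r ret[OF i] a1 a2 d by blast
      qed
    qed
  qed
qed


lemma acyc_lt: "r \<subseteq> {(x::nat, y). x < y} \<Longrightarrow> acyclic r"
proof -
  assume s: "r \<subseteq> {(x::nat, y). x < y}"
  have "(x, y) \<in> r\<^sup>+ \<Longrightarrow> x < y" for x y
    by (induction rule: trancl_induct) (use s in auto)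
  then show ?thesis unfolding acyclic_def by blast
qed

lemma in_ex: "{u. (u, n) \<in> ex_A} = (if n = 1 then {0} else if n = 2 \<or> n = 3 then {1}
   else if n = 4 \<or> n = 5 then {2,3} else if n = 6 then {4} else if n = 7 then {5} else {})"
  unfolding ex_A_def by auto
lemma out_ex: "{w. (n, w) \<in> ex_A} = (if n = 0 then {1} else if n = 1 then {2,3}
   else if n = 2 \<or> n = 3 then {4,5} else if n = 4 then {6} else if n = 5 then {7} else {})"
  unfolding ex_A_def by auto

lemma indeg_ex: "indeg ex_A n = (if n = 0 then 0 else if n = 4 \<or> n = 5 then 2 else if n \<le> 7 then 1 else 0)"
  unfolding indeg_def in_ex by auto
lemma outdeg_ex: "outdeg ex_A n = (if n = 0 then 1 else if n \<le> 3 then 2 else if n \<le> 5 then 1 else 0)"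
  unfolding outdeg_def out_ex by auto

lemma exV: "n \<in> ex_V \<longleftrightarrow> n = 0 \<or> n = 1 \<or> n = 2 \<or> n = 3 \<or> n = 4 \<or> n = 5 \<or> n = 6 \<or> n = 7"
  unfolding ex_V_def by auto

lemma leaves_ex: "{v \<in> ex_V. is_leaf ex_A v} = {6, 7}"
  unfolding is_leaf_def indeg_ex outdeg_ex exV by auto

lemma bin_ex: "binary_network ex_V ex_A ex_X ex_lab"
  unfolding binary_network_def network_def
proof (intro conjI)
  show "finite ex_V" unfolding ex_V_def by simp
  show "finite ex_X" unfolding ex_X_def by simp
  show "ex_A \<subseteq> ex_V \<times> ex_V" unfolding ex_A_def ex_V_def by auto
  show "acyclic ex_A" by (rule acyc_lt) (auto simp: ex_A_def)
  show "\<exists>!r. r \<in> ex_V \<and> is_root ex_A r"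
    by (rule ex1I[of _ 0]) (auto simp: exV is_root_def indeg_ex outdeg_ex)
  show "\<forall>v\<in>ex_V. is_root ex_A v \<or> is_tree_node ex_A v \<or> is_reticulation ex_A v \<or> is_leaf ex_A v"
    by (auto simp: exV is_root_def is_tree_node_def is_reticulation_def is_leaf_def indeg_ex outdeg_ex)
  show "bij_betw ex_lab ex_X {v \<in> ex_V. is_leaf ex_A v}"
    unfolding leaves_ex bij_betw_def ex_X_def ex_lab_def inj_on_def by auto
  show "\<forall>v\<in>ex_V. (is_tree_node ex_A v \<or> is_reticulation ex_A v) \<longrightarrow> indeg ex_A v + outdeg ex_A v = 3"
    by (auto simp: exV is_tree_node_def is_reticulation_def indeg_ex outdeg_ex)
qed

definition ex_VT :: "nat set" where "ex_VT = {0, 1, 6, 7}"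
definition ex_AT :: "(nat \<times> nat) set" where "ex_AT = {(0,1), (1,6), (1,7)}"
definition ex_sub :: "nat \<times> nat \<Rightarrow> nat list" where
  "ex_sub e = (if e = (1,6) then [2,4] else if e = (1,7) then [3,5] else [])"
definition ex_L :: "(nat \<times> nat) set" where "ex_L = {(2,5), (3,4)}"

lemma inT: "{u. (u, n) \<in> ex_AT} = (if n = 1 then {0} else if n = 6 \<or> n = 7 then {1} else {})"
  unfolding ex_AT_def by auto
lemma outT: "{w. (n, w) \<in> ex_AT} = (if n = 0 then {1} else if n = 1 then {6,7} else {})"
  unfolding ex_AT_def by auto
lemma indeg_T: "indeg ex_AT n = (if n = 1 \<or> n = 6 \<or> n = 7 then 1 else 0)"
  unfolding indeg_def inT by auto
lemma outdeg_T: "outdeg ex_AT n = (if n = 0 then 1 else if n = 1 then 2 else 0)"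
  unfolding outdeg_def outT by auto
lemma exVT: "n \<in> ex_VT \<longleftrightarrow> n = 0 \<or> n = 1 \<or> n = 6 \<or> n = 7"
  unfolding ex_VT_def by auto
lemma leaves_T: "{v \<in> ex_VT. is_leaf ex_AT v} = {6, 7}"
  unfolding is_leaf_def indeg_T outdeg_T exVT by auto

lemma binT: "binary_network ex_VT ex_AT ex_X ex_lab"
  unfolding binary_network_def network_def
proof (intro conjI)
  show "finite ex_VT" unfolding ex_VT_def by simp
  show "finite ex_X" unfolding ex_X_def by simp
  show "ex_AT \<subseteq> ex_VT \<times> ex_VT" unfolding ex_AT_def ex_VT_def by auto
  show "acyclic ex_AT" by (rule acyc_lt) (auto simp: ex_AT_def)
  show "\<exists>!r. r \<in> ex_VT \<and> is_root ex_AT r"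
    by (rule ex1I[of _ 0]) (auto simp: exVT is_root_def indeg_T outdeg_T)
  show "\<forall>v\<in>ex_VT. is_root ex_AT v \<or> is_tree_node ex_AT v \<or> is_reticulation ex_AT v \<or> is_leaf ex_AT v"
    by (auto simp: exVT is_root_def is_tree_node_def is_reticulation_def is_leaf_def indeg_T outdeg_T)
  show "bij_betw ex_lab ex_X {v \<in> ex_VT. is_leaf ex_AT v}"
    unfolding leaves_T bij_betw_def ex_X_def ex_lab_def inj_on_def by auto
  show "\<forall>v\<in>ex_VT. (is_tree_node ex_AT v \<or> is_reticulation ex_AT v) \<longrightarrow> indeg ex_AT v + outdeg ex_AT v = 3"
    by (auto simp: exVT is_tree_node_def is_reticulation_def indeg_T outdeg_T)
qed

lemma tbw_ex: "tree_based_with ex_V ex_A ex_X ex_lab ex_VT ex_AT"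
    unfolding tree_based_with_def
  proof (intro conjI exI[of _ ex_L] exI[of _ ex_sub])
    show "binary_network ex_VT ex_AT ex_X ex_lab" by (rule binT)
    show "\<forall>v\<in>ex_VT. \<not> is_reticulation ex_AT v"
      by (auto simp: exVT is_reticulation_def indeg_T outdeg_T)
    show "ex_VT \<subseteq> ex_V" unfolding ex_VT_def ex_V_def by auto
    show "ex_L \<subseteq> ex_A" unfolding ex_L_def ex_A_def by auto
    have d: "ex_V - ex_VT = {2,3,4,5}" unfolding ex_V_def ex_VT_def by auto
    show "ex_L \<subseteq> (ex_V - ex_VT) \<times> (ex_V - ex_VT)" unfolding d ex_L_def by auto
    show "\<forall>p\<in>ex_V - ex_VT. \<exists>q. (p, q) \<in> ex_L \<or> (q, p) \<in> ex_L" unfolding d ex_L_def by auto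
    show "\<forall>e\<in>ex_AT. distinct (ex_sub e) \<and> set (ex_sub e) \<subseteq> ex_V - ex_VT"
      unfolding d ex_AT_def ex_sub_def by auto
    show "\<forall>e\<in>ex_AT. \<forall>e'\<in>ex_AT. e \<noteq> e' \<longrightarrow> set (ex_sub e) \<inter> set (ex_sub e') = {}"
      unfolding ex_AT_def ex_sub_def by auto
    show "(\<Union>e\<in>ex_AT. set (ex_sub e)) = ex_V - ex_VT"
      unfolding d ex_AT_def ex_sub_def by auto
    show "ex_A - ex_L = (\<Union>(x, y)\<in>ex_AT. path_arcs (x # ex_sub (x, y) @ [y]))"
      unfolding ex_A_def ex_L_def ex_AT_def ex_sub_def path_arcs_def by auto
  qed

lemma tb_ex: "tree_based ex_V ex_A ex_X ex_lab"
  unfolding tree_based_def using bin_ex tbw_ex by blast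

lemma crown_ex: "has_crown ex_V ex_A"
  unfolding has_crown_def
  apply (rule exI[of _ 2], rule exI[of _ "\<lambda>i::nat. if i = 0 then 2 else (3::nat)"],
         rule exI[of _ "\<lambda>i::nat. if i = 0 then 4 else (5::nat)"])
  apply (simp only: lessThan_def)
  apply (auto simp: ex_V_def ex_A_def inj_on_def less_2_cases_iff)
  done

theorem mainTheorem2:
  fixes V :: "'v set" and A :: "('v \<times> 'v) set" and X :: "'x set" and lab :: "'x \<Rightarrow> 'v"
  shows "(binary_network V A X lab \<and> has_crown V A \<longrightarrow> \<not> (\<exists>t. hgt_consistent V A t)) \<and>
         (tree_based ex_V ex_A ex_X ex_lab \<and> \<not> (\<exists>t. hgt_consistent ex_V ex_A t))"
proof (intro conjI impI notI)
  show "tree_based ex_V ex_A ex_X ex_lab" by (rule tb_ex)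
next
  assume "binary_network V A X lab \<and> has_crown V A" "\<exists>t. hgt_consistent V A t"
  then show False using part1 by metis
next
  assume "\<exists>t. hgt_consistent ex_V ex_A t"
  then obtain t where "hgt_consistent ex_V ex_A t" by blast
  then show False using part1[OF bin_ex crown_ex] by blast
qed

end
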